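(* Let $(B,k)$ be an instance of the orthogonal buttons and scissors problem. If $B$ has more than $k$ heavy rows or more than $k$ heavy columns, then $(B,k)$ is a no-instance.
   Context: An instance of the orthogonal buttons and scissors problem is a pair $(B,k)$ where $B$ is an $n\times m$ matrix with nonnegative integer entries and $k$ is a nonnegative integer. Cell $(i,j)$ contains a button of color $c$ if $B[i,j]=c>0$, and no button if $B[i,j]=0$. A cut is either a horizontal cut (a sequence of consecutive cells in one row) or a vertical cut (a sequence of consecutive cells in one column). Cuts are applied one after another; a cut is valid at the moment it is applied if, among the buttons still present, its first and last cells contain buttons and all buttons in its cells have the same color. Applying a cut deletes all buttons in its cells. $(B,k)$ is a yes-instance if some sequence of at most $k$ cuts, each valid when applied, removes all buttons of $B$, and a no-instance otherwise. A row or column of $B$ is heavy if it contains at least $k+1$ buttons. *)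

theory Defs
  imports Main
begin

text \<open>A board is an n x m matrix with nonnegative integer entries, represented as a
function from (row, column) indices (0-based, row < n, column < m) to nat.
Entry 0 means no button; entry c > 0 means a button of colour c.\<close>

type_synonym board = "nat \<Rightarrow> nat \<Rightarrow> nat"

text \<open>HCut i j1 j2: horizontal cut in row i from column j1 to column j2 (j1 <= j2).
VCut j i1 i2: vertical cut in column j from row i1 to row i2 (i1 <= i2).\<close>
datatype cut = HCut nat nat nat | VCut nat nat nat

fun cut_cells :: "cut \<Rightarrow> (nat \<times> nat) set" where
  "cut_cells (HCut i j1 j2) = {(i, j) | j. j1 \<le> j \<and> j \<le> j2}"
| "cut_cells (VCut j i1 i2) = {(i, j) | i. i1 \<le> i \<and> i \<le> i2}"

fun cut_first :: "cut \<Rightarrow> nat \<times> nat" where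
  "cut_first (HCut i j1 j2) = (i, j1)"
| "cut_first (VCut j i1 i2) = (i1, j)"

fun cut_last :: "cut \<Rightarrow> nat \<times> nat" where
  "cut_last (HCut i j1 j2) = (i, j2)"
| "cut_last (VCut j i1 i2) = (i2, j)"

fun cut_in_grid :: "nat \<Rightarrow> nat \<Rightarrow> cut \<Rightarrow> bool" where
  "cut_in_grid n m (HCut i j1 j2) \<longleftrightarrow> i < n \<and> j1 \<le> j2 \<and> j2 < m"
| "cut_in_grid n m (VCut j i1 i2) \<longleftrightarrow> j < m \<and> i1 \<le> i2 \<and> i2 < n"

definition valid_cut :: "nat \<Rightarrow> nat \<Rightarrow> board \<Rightarrow> cut \<Rightarrow> bool" where
  "valid_cut n m B c \<longleftrightarrow> cut_in_grid n m c
     \<and> case_prod B (cut_first c) > 0 \<and> case_prod B (cut_last c) > 0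
     \<and> (\<exists>col. \<forall>(i, j) \<in> cut_cells c. B i j > 0 \<longrightarrow> B i j = col)"

definition apply_cut :: "board \<Rightarrow> cut \<Rightarrow> board" where
  "apply_cut B c = (\<lambda>i j. if (i, j) \<in> cut_cells c then 0 else B i j)"

fun valid_seq :: "nat \<Rightarrow> nat \<Rightarrow> board \<Rightarrow> cut list \<Rightarrow> bool" where
  "valid_seq n m B [] = True"
| "valid_seq n m B (c # cs) \<longleftrightarrow> valid_cut n m B c \<and> valid_seq n m (apply_cut B c) cs"

definition apply_seq :: "board \<Rightarrow> cut list \<Rightarrow> board" where
  "apply_seq B cs = foldl apply_cut B cs"

definition cleared :: "nat \<Rightarrow> nat \<Rightarrow> board \<Rightarrow> bool" where
  "cleared n m B \<longleftrightarrow> (\<forall>i<n. \<forall>j<m. B i j = 0)"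

definition yes_instance :: "nat \<Rightarrow> nat \<Rightarrow> board \<Rightarrow> nat \<Rightarrow> bool" where
  "yes_instance n m B k \<longleftrightarrow>
     (\<exists>cs. length cs \<le> k \<and> valid_seq n m B cs \<and> cleared n m (apply_seq B cs))"

definition heavy_row :: "nat \<Rightarrow> nat \<Rightarrow> board \<Rightarrow> nat \<Rightarrow> nat \<Rightarrow> bool" where
  "heavy_row n m B k i \<longleftrightarrow> i < n \<and> card {j. j < m \<and> B i j > 0} \<ge> k + 1"

definition heavy_col :: "nat \<Rightarrow> nat \<Rightarrow> board \<Rightarrow> nat \<Rightarrow> nat \<Rightarrow> bool" where
  "heavy_col n m B k j \<longleftrightarrow> j < m \<and> card {i. i < n \<and> B i j > 0} \<ge> k + 1"

end

theory Submission
  imports Defs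
begin

lemma apply_seq_cells:
  "apply_seq B cs i j = (if (\<exists>c\<in>set cs. (i,j) \<in> cut_cells c) then 0 else B i j)"
  unfolding apply_seq_def
  by (induction cs arbitrary: B) (auto simp: apply_cut_def)

fun rowOf :: "cut \<Rightarrow> nat" where
  "rowOf (HCut i _ _) = i" | "rowOf (VCut j _ _) = 0"
fun colOf :: "cut \<Rightarrow> nat" where
  "colOf (HCut i _ _) = 0" | "colOf (VCut j _ _) = j"
fun isH :: "cut \<Rightarrow> bool" where
  "isH (HCut _ _ _) = True" | "isH (VCut _ _ _) = False"

lemma heavy_rows_hit:
  assumes cl: "cleared n m (apply_seq B cs)" and len: "length cs \<le> k"
    and h: "heavy_row n m B k i"
  shows "i \<in> rowOf ` {c \<in> set cs. isH c}"
proof (rule ccontr)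
  assume nh: "i \<notin> rowOf ` {c \<in> set cs. isH c}"
  have sub: "{j. j < m \<and> B i j > 0} \<subseteq> colOf ` set cs"
  proof
    fix j assume j: "j \<in> {j. j < m \<and> B i j > 0}"
    from h have "i < n" by (simp add: heavy_row_def)
    with j cl have "apply_seq B cs i j = 0" by (simp add: cleared_def)
    with j obtain c where c: "c \<in> set cs" "(i,j) \<in> cut_cells c"
      by (auto simp: apply_seq_cells split: if_splits)
    show "j \<in> colOf ` set cs"
    proof (cases c)
      case (HCut a b d)
      with c nh show ?thesis by force
    next
      case (VCut a b d)
      with c show ?thesis by force
    qed
  qed
  have "card {j. j < m \<and> B i j > 0} \<le> card (colOf ` set cs)"
    by (rule card_mono[OF _ sub]) simp
  also have "\<dots> \<le> card (set cs)" by (rule card_image_le) simp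
  also have "\<dots> \<le> k" using len card_length[of cs] by linarith
  finally show False using h by (simp add: heavy_row_def)
qed

lemma heavy_cols_hit:
  assumes cl: "cleared n m (apply_seq B cs)" and len: "length cs \<le> k"
    and h: "heavy_col n m B k j"
  shows "j \<in> colOf ` {c \<in> set cs. \<not> isH c}"
proof (rule ccontr)
  assume nh: "j \<notin> colOf ` {c \<in> set cs. \<not> isH c}"
  have sub: "{i. i < n \<and> B i j > 0} \<subseteq> rowOf ` set cs"
  proof
    fix i assume i: "i \<in> {i. i < n \<and> B i j > 0}"
    from h have "j < m" by (simp add: heavy_col_def)
    with i cl have "apply_seq B cs i j = 0" by (simp add: cleared_def)
    with i obtain c where c: "c \<in> set cs" "(i,j) \<in> cut_cells c"
      by (auto simp: apply_seq_cells split: if_splits)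
    show "i \<in> rowOf ` set cs"
    proof (cases c)
      case (HCut a b d)
      with c show ?thesis by force
    next
      case (VCut a b d)
      with c nh show ?thesis by force
    qed
  qed
  have "card {i. i < n \<and> B i j > 0} \<le> card (rowOf ` set cs)"
    by (rule card_mono[OF _ sub]) simp
  also have "\<dots> \<le> card (set cs)" by (rule card_image_le) simp
  also have "\<dots> \<le> k" using len card_length[of cs] by linarith
  finally show False using h by (simp add: heavy_col_def)
qed

theorem mainTheorem2:
  fixes n m k :: nat and B :: board
  assumes "card {i. heavy_row n m B k i} > k \<or> card {j. heavy_col n m B k j} > k"
  shows "\<not> yes_instance n m B k"
proof
  assume "yes_instance n m B k"
  then obtain cs where len: "length cs \<le> k" and cl: "cleared n m (apply_seq B cs)"
    by (auto simp: yes_instance_def)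
  have ck: "card (set cs) \<le> k" using len card_length[of cs] by linarith
  have "card {i. heavy_row n m B k i} \<le> k"
  proof -
    have "{i. heavy_row n m B k i} \<subseteq> rowOf ` {c \<in> set cs. isH c}"
      using heavy_rows_hit[OF cl len] by blast
    then have "card {i. heavy_row n m B k i} \<le> card (rowOf ` {c \<in> set cs. isH c})"
      by (rule card_mono[rotated]) simp
    also have "\<dots> \<le> card {c \<in> set cs. isH c}" by (rule card_image_le) simp
    also have "\<dots> \<le> card (set cs)" by (rule card_mono) auto
    finally show ?thesis using ck by linarith
  qed
  moreover have "card {j. heavy_col n m B k j} \<le> k"
  proof -
    have "{j. heavy_col n m B k j} \<subseteq> colOf ` {c \<in> set cs. \<not> isH c}"
      using heavy_cols_hit[OF cl len] by blast
    then have "card {j. heavy_col n m B k j} \<le> card (colOf ` {c \<in> set cs. \<not> isH c})"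
      by (rule card_mono[rotated]) simp
    also have "\<dots> \<le> card {c \<in> set cs. \<not> isH c}" by (rule card_image_le) simp
    also have "\<dots> \<le> card (set cs)" by (rule card_mono) auto
    finally show ?thesis using ck by linarith
  qed
  ultimately show False using assms by linarith
qed

end
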